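(* For every $\Gamma\in F(L)$, $\operatorname{div}(u_\Gamma)=\operatorname{tr}(g-g^* )$, where $g=\partial^L_x(\partial_y(\Gamma))$ and $g\mapsto g^*$ is the linear map of $A$ reversing the order of letters in each monomial and multiplying each letter by $-1$ (i.e. $(a_1\cdots a_n)^*=(-1)^na_n\cdots a_1$).
   Context: $A=\mathbb{R}\langle x,y\rangle$; $L\subset A$ the free Lie algebra on $x,y$. $\operatorname{tr}$ is the projection $A\to A/\operatorname{span}\{ab-ba\}$. $F(L)$ is the quotient of $L\otimes L$ by the span of $a\otimes b-b\otimes a$ and $a\otimes[b,c]-[a,b]\otimes c$, regarded inside $A/\operatorname{span}\{ab-ba\}$ via $a\otimes b\mapsto\operatorname{tr}(ab)$. For $x_0\in\{x,y\}$, $\partial_{x_0}$ maps cyclic words by $\operatorname{tr}(a_1\cdots a_n)\mapsto\sum_{i:\,a_i=x_0}a_{i+1}\cdots a_n a_1\cdots a_{i-1}$. For $\Gamma\in F(L)$, $u_\Gamma$ is the derivation of $L$ with $u_\Gamma(x)=\partial_y\Gamma$, $u_\Gamma(y)=-\partial_x\Gamma$. For $l\in A$, $\partial^L_{x_0}(l)=\sum\partial^1\epsilon(\partial^2)$, where $\sum\partial^1\otimes\partial^2$ is the sum over occurrences of $x_0$ in monomials of (prefix)$\otimes$(suffix), and $\epsilon$ is the constant term. $\operatorname{div}(u)=\operatorname{tr}(\partial^L_x(u(x))+\partial^L_y(u(y)))$ for $u\in\operatorname{Der}(L)$. *)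

theory Defs
  imports Complex_Main
begin

text \<open>The alphabet {x, y}; A = R<x,y> is represented by coefficient functions on words
  (elements of interest have finite support).\<close>
datatype letter = X | Y

type_synonym A = "letter list \<Rightarrow> real"

definition fsupp :: "A \<Rightarrow> bool" where
  "fsupp a \<longleftrightarrow> finite {w. a w \<noteq> 0}"

definition mono :: "letter list \<Rightarrow> A" where
  "mono w = (\<lambda>v. if v = w then 1 else 0)"

definition mulA :: "A \<Rightarrow> A \<Rightarrow> A" where
  "mulA a b = (\<lambda>w. \<Sum>i\<le>length w. a (take i w) * b (drop i w))"

text \<open>Free Lie algebra L: the smallest subspace containing x, y closed under commutators.\<close>
inductive_set Lie :: "A set" where
  gen: "mono [c] \<in> Lie"
| add: "a \<in> Lie \<Longrightarrow> b \<in> Lie \<Longrightarrow> (\<lambda>w. a w + b w) \<in> Lie"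
| smul: "a \<in> Lie \<Longrightarrow> (\<lambda>w. r * a w) \<in> Lie"
| br: "a \<in> Lie \<Longrightarrow> b \<in> Lie \<Longrightarrow> (\<lambda>w. mulA a b w - mulA b a w) \<in> Lie"

text \<open>Trace A \<rightarrow> A/[A,A]. The quotient is identified with functions on words that are
  constant on rotation classes: tr a assigns to w the total coefficient of a on the
  rotation class (cyclic word) of w.\<close>
definition tr :: "A \<Rightarrow> A" where
  "tr a = (\<lambda>w. \<Sum>v\<in>set (map (\<lambda>k. rotate k w) [0..<Suc (length w)]). a v)"

definition linext :: "(letter list \<Rightarrow> A) \<Rightarrow> A \<Rightarrow> A" where
  "linext f a = (\<lambda>v. \<Sum>w\<in>{w. a w \<noteq> 0}. a w * f w v)"

definition cder :: "letter \<Rightarrow> A \<Rightarrow> A" where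
  "cder x0 = linext (\<lambda>w v. \<Sum>i<length w.
      if w ! i = x0 \<and> drop (Suc i) w @ take i w = v then 1 else 0)"

definition cyc_der :: "letter \<Rightarrow> A \<Rightarrow> A" where
  "cyc_der x0 \<Gamma> = cder x0 (SOME P. fsupp P \<and> tr P = \<Gamma>)"

definition epsA :: "A \<Rightarrow> real" where
  "epsA a = a []"

definition derL :: "letter \<Rightarrow> A \<Rightarrow> A" where
  "derL x0 = linext (\<lambda>w v. \<Sum>i<length w.
      if w ! i = x0 \<and> take i w = v then epsA (mono (drop (Suc i) w)) else 0)"

text \<open>F(L) inside A/[A,A]: image of L \<otimes> L under a \<otimes> b \<mapsto> tr(ab).\<close>
definition FL :: "A set" where
  "FL = {tr (\<lambda>w. \<Sum>(a, b)\<leftarrow>ps. mulA a b w) | ps. \<forall>(a, b)\<in>set ps. a \<in> Lie \<and> b \<in> Lie}"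

text \<open>A derivation of the free Lie algebra L is determined by its values on the
  generators; we represent u by u(x) = u X, u(y) = u Y.\<close>
definition uGamma :: "A \<Rightarrow> letter \<Rightarrow> A" where
  "uGamma \<Gamma> c = (if c = X then cyc_der Y \<Gamma> else (\<lambda>w. - cyc_der X \<Gamma> w))"

definition divg :: "(letter \<Rightarrow> A) \<Rightarrow> A" where
  "divg u = tr (\<lambda>w. derL X (u X) w + derL Y (u Y) w)"

definition star :: "A \<Rightarrow> A" where
  "star g = (\<lambda>w. (-1) ^ length w * g (rev w))"

end

theory Submission
  imports Defs
begin


definition R :: "A \<Rightarrow> letter list \<Rightarrow> real" where
  "R P w = (\<Sum>j<length w. P (rotate j w))"

lemma rot_le: "i \<le> length u \<Longrightarrow> rotate i u = drop i u @ take i u"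
proof (cases "i = length u")
  case True then show ?thesis by simp
next
  case False
  assume "i \<le> length u" with False have "i < length u" by simp
  then show ?thesis by (simp add: rotate_drop_take)
qed

lemma rot_mod: "rotate (j mod length w) w = rotate j w"
  by (metis rotate_conv_mod)

lemma modinj:
  fixes a b k n :: nat
  assumes "a < n" "b < n" "(a + k) mod n = (b + k) mod n"
  shows "a = b"
proof -
  define m where "m = k mod n"
  have m: "m < n" using assms by (simp add: m_def)
  have ea: "(a + k) mod n = (a + m) mod n" by (simp add: m_def mod_add_right_eq)
  have eb: "(b + k) mod n = (b + m) mod n" by (simp add: m_def mod_add_right_eq)
  have f: "(x + m) mod n = (if x + m < n then x + m else x + m - n)" if "x < n" for x
  proof (cases "x + m < n")
    case True then show ?thesis by simp
  next
    case False
    then have "(x + m) mod n = (x + m - n) mod n" by (simp add: le_mod_geq)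
    also have "\<dots> = x + m - n" using that m by simp
    finally show ?thesis using False by simp
  qed
  show ?thesis using assms(3) ea eb f[OF assms(1)] f[OF assms(2)] assms(1,2) m
    by (auto split: if_splits)
qed

lemma cnt_le:
  fixes w :: "letter list"
  defines "n \<equiv> length w"
  shows "card {j. j < n \<and> rotate j w = v} \<le> card {j. j < n \<and> rotate j w = rotate k v}"
proof (rule card_inj_on_le)
  show "inj_on (\<lambda>j. (j + k) mod n) {j. j < n \<and> rotate j w = v}"
  proof (rule inj_onI)
    fix a b assume a: "a \<in> {j. j < n \<and> rotate j w = v}" and b: "b \<in> {j. j < n \<and> rotate j w = v}"
      and e: "(a + k) mod n = (b + k) mod n"
    with a b show "a = b" using modinj by auto
  qed
  show "(\<lambda>j. (j + k) mod n) ` {j. j < n \<and> rotate j w = v} \<subseteq> {j. j < n \<and> rotate j w = rotate k v}"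
  proof
    fix x assume "x \<in> (\<lambda>j. (j + k) mod n) ` {j. j < n \<and> rotate j w = v}"
    then obtain j where j: "j < n" "rotate j w = v" and x: "x = (j + k) mod n" by auto
    have "n > 0" using j by simp
    then have "x < n" using x by simp
    moreover have "rotate x w = rotate k v"
    proof -
      have "rotate x w = rotate (j + k) w" using x by (simp add: n_def rot_mod)
      also have "\<dots> = rotate k (rotate j w)" by (simp add: rotate_rotate add.commute)
      finally show ?thesis using j by simp
    qed
    ultimately show "x \<in> {j. j < n \<and> rotate j w = rotate k v}" by simp
  qed
qed simp

lemma cnt_eq:
  fixes w :: "letter list"
  defines "n \<equiv> length w"
  assumes k: "k < n"
  shows "card {j. j < n \<and> rotate j w = rotate k w} = card {j. j < n \<and> rotate j w = w}"
proof (rule antisym)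
  show "card {j. j < n \<and> rotate j w = w} \<le> card {j. j < n \<and> rotate j w = rotate k w}"
    using cnt_le[of w w k] n_def by simp
  have "rotate (n - k) (rotate k w) = w"
    using k by (simp add: rotate_rotate n_def)
  then show "card {j. j < n \<and> rotate j w = rotate k w} \<le> card {j. j < n \<and> rotate j w = w}"
    using cnt_le[of w "rotate k w" "n - k"] n_def by simp
qed

lemma orbit_eq:
  assumes "w \<noteq> []"
  shows "set (map (\<lambda>k. rotate k w) [0..<Suc (length w)]) = (\<lambda>j. rotate j w) ` {..<length w}"
proof -
  have "set (map (\<lambda>k. rotate k w) [0..<Suc (length w)]) = (\<lambda>j. rotate j w) ` {..<Suc (length w)}"
    by (simp only: set_map set_upt atLeast0LessThan)
  also have "{..<Suc (length w)} = insert (length w) {..<length w}" by auto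
  also have "(\<lambda>j. rotate j w) ` insert (length w) {..<length w} = (\<lambda>j. rotate j w) ` {..<length w}"
  proof -
    have "rotate (length w) w \<in> (\<lambda>j. rotate j w) ` {..<length w}"
      using assms by (intro image_eqI[where x=0]) auto
    then show ?thesis by (simp add: insert_absorb)
  qed
  finally show ?thesis .
qed

lemma R_tr:
  "R P w = real (card {j. j < length w \<and> rotate j w = w}) * tr P w"
proof (cases "w = []")
  case True then show ?thesis by (simp add: R_def)
next
  case False
  let ?n = "length w"
  let ?c = "card {j. j < ?n \<and> rotate j w = w}"
  have "R P w = (\<Sum>v\<in>(\<lambda>j. rotate j w) ` {..<?n}. \<Sum>j\<in>{j. j \<in> {..<?n} \<and> rotate j w = v}. P (rotate j w))"
    unfolding R_def by (rule sum.image_gen) simp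
  also have "\<dots> = (\<Sum>v\<in>(\<lambda>j. rotate j w) ` {..<?n}. real ?c * P v)"
  proof (rule sum.cong[OF refl])
    fix v assume "v \<in> (\<lambda>j. rotate j w) ` {..<?n}"
    then obtain k where k: "k < ?n" "v = rotate k w" by auto
    have "(\<Sum>j\<in>{j. j \<in> {..<?n} \<and> rotate j w = v}. P (rotate j w)) = (\<Sum>j\<in>{j. j < ?n \<and> rotate j w = v}. P v)"
      by (rule sum.cong) auto
    also have "\<dots> = real (card {j. j < ?n \<and> rotate j w = v}) * P v" by simp
    also have "card {j. j < ?n \<and> rotate j w = v} = ?c" using cnt_eq[OF k(1)] k(2) by simp
    finally show "(\<Sum>j\<in>{j. j \<in> {..<?n} \<and> rotate j w = v}. P (rotate j w)) = real ?c * P v" .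
  qed
  also have "\<dots> = real ?c * tr P w"
    unfolding tr_def orbit_eq[OF False] by (simp add: sum_distrib_left)
  finally show ?thesis .
qed

lemma R_cong_tr: "tr P = tr Q \<Longrightarrow> R P w = R Q w"
  by (simp add: R_tr)



lemma inv1: "a < n \<Longrightarrow> (n - (n - a) mod n) mod n = (a::nat)"
proof (cases "a = 0")
  case True then show ?thesis by simp
next
  case False
  assume a: "a < n"
  then have "(n - a) mod n = n - a" using False by simp
  then show ?thesis using a by simp
qed

lemma invol_bij: "bij_betw (\<lambda>j. (n - j) mod n) {..<n} {..<(n::nat)}"
  by (rule bij_betw_byWitness[where f'="\<lambda>j. (n - j) mod n"]) (auto simp: inv1)

lemma R_rev: "R P (rev w) = R (\<lambda>v. P (rev v)) w"
proof -
  let ?n = "length w"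
  have "R P (rev w) = (\<Sum>j<?n. P (rev (rotate ((?n - j) mod ?n) w)))"
    unfolding R_def
  proof (rule sum.cong)
    fix j assume j: "j \<in> {..<?n}"
    then have "rotate j (rev w) = rev (rotate (?n - j) w)" by (simp add: rotate_rev)
    also have "\<dots> = rev (rotate ((?n - j) mod ?n) w)" by (simp add: rot_mod)
    finally show "P (rotate j (rev w)) = P (rev (rotate ((?n - j) mod ?n) w))" by simp
  qed simp
  also have "\<dots> = (\<Sum>j<?n. P (rev (rotate j w)))"
    by (rule sum.reindex_bij_betw[OF invol_bij, where g="\<lambda>i. P (rev (rotate i w))"])
  finally show ?thesis by (simp add: R_def)
qed

lemma rot_split: "i \<le> length u \<Longrightarrow> rotate i u = drop i u @ take i u"
  by (rule rot_le)

lemma inv2: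
  assumes a: "j < n" "i \<le> (n::nat)"
  shows "((j + i) mod n + n - i) mod n = j"
proof -
  have "(j + i) mod n + n - i = (j + i) mod n + (n - i)" using a by simp
  then have "((j + i) mod n + n - i) mod n = (j + i + (n - i)) mod n" by (simp add: mod_add_left_eq)
  also have "j + i + (n - i) = j + n" using a by simp
  also have "(j + n) mod n = j" using a by simp
  finally show ?thesis .
qed

lemma prodinvol_bij:
  assumes n: "n > 0"
  shows "bij_betw (\<lambda>(j, i). ((j + i) mod n, n - i)) ({..<n} \<times> {..n}) ({..<n} \<times> {..(n::nat)})"
  by (rule bij_betw_byWitness[where f'="\<lambda>(j, i). ((j + i) mod n, n - i)"]) (auto simp: inv2 n)

lemma R_mul_comm: "R (mulA a b) w = R (mulA b a) w"
proof (cases "w = []")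
  case True then show ?thesis by (simp add: R_def)
next
  case False
  let ?n = "length w"
  have n: "?n > 0" using False by simp
  define f where "f = (\<lambda>(j, i). a (take i (rotate j w)) * b (drop i (rotate j w)))"
  define g where "g = (\<lambda>(j, i). b (take i (rotate j w)) * a (drop i (rotate j w)))"
  let ?h = "\<lambda>(j, i). ((j + i) mod ?n, ?n - i)"
  have "R (mulA a b) w = (\<Sum>j<?n. \<Sum>i\<le>?n. f (j, i))"
    unfolding R_def mulA_def f_def by simp
  also have "\<dots> = sum f ({..<?n} \<times> {..?n})"
    by (simp add: sum.cartesian_product)
  also have "\<dots> = sum (\<lambda>p. g (?h p)) ({..<?n} \<times> {..?n})"
  proof (rule sum.cong[OF refl])
    fix p assume "p \<in> {..<?n} \<times> {..?n}"
    then obtain j i where p: "p = (j, i)" "j < ?n" "i \<le> ?n" by auto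
    let ?u = "rotate j w"
    have "rotate ((j + i) mod ?n) w = rotate i ?u" by (simp add: rot_mod rotate_rotate add.commute)
    also have "\<dots> = drop i ?u @ take i ?u" using p by (simp add: rot_le)
    finally have e: "rotate ((j + i) mod ?n) w = drop i ?u @ take i ?u" .
    have l: "length (drop i ?u) = ?n - i" by simp
    show "f p = g (?h p)" using e l p by (simp add: f_def g_def)
  qed
  also have "\<dots> = sum g ({..<?n} \<times> {..?n})"
    by (rule sum.reindex_bij_betw[OF prodinvol_bij[OF n]])
  also have "\<dots> = (\<Sum>j<?n. \<Sum>i\<le>?n. g (j, i))"
    by (simp add: sum.cartesian_product)
  also have "\<dots> = R (mulA b a) w"
    unfolding R_def mulA_def g_def by simp
  finally show ?thesis .
qed



lemma sum_rev_atMost: "(\<Sum>i\<le>n. f (n - i)) = (\<Sum>i\<le>(n::nat). (f i :: real))"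
proof -
  have "(\<Sum>i<Suc n. f (Suc n - Suc i)) = (\<Sum>i<Suc n. f i)" by (rule sum.nat_diff_reindex)
  then show ?thesis by (simp add: lessThan_Suc_atMost)
qed

lemma star_mul: "star (mulA a b) = mulA (star b) (star a)"
proof (rule ext)
  fix w :: "letter list"
  let ?n = "length w"
  have "star (mulA a b) w = (-1) ^ ?n * (\<Sum>i\<le>?n. a (rev (drop (?n - i) w)) * b (rev (take (?n - i) w)))"
    by (simp add: star_def mulA_def take_rev drop_rev)
  also have "\<dots> = (-1) ^ ?n * (\<Sum>i\<le>?n. a (rev (drop i w)) * b (rev (take i w)))"
    using sum_rev_atMost[of "\<lambda>i. a (rev (drop i w)) * b (rev (take i w))" ?n] by simp
  also have "\<dots> = (\<Sum>i\<le>?n. ((-1) ^ i * b (rev (take i w))) * ((-1) ^ (?n - i) * a (rev (drop i w))))"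
    unfolding sum_distrib_left
  proof (rule sum.cong[OF refl])
    fix i assume "i \<in> {..?n}"
    then have "(-1::real) ^ ?n = (-1) ^ i * (-1) ^ (?n - i)" by (simp add: power_add[symmetric])
    then show "(-1) ^ ?n * (a (rev (drop i w)) * b (rev (take i w))) =
      (-1) ^ i * b (rev (take i w)) * ((-1) ^ (?n - i) * a (rev (drop i w)))" by simp
  qed
  also have "\<dots> = mulA (star b) (star a) w"
    by (simp add: mulA_def star_def)
  finally show "star (mulA a b) w = mulA (star b) (star a) w" .
qed

lemma star_Lie: "a \<in> Lie \<Longrightarrow> star a = (\<lambda>w. - a w)"
proof (induction rule: Lie.induct)
  case (gen c)
  show ?case
  proof (rule ext)
    fix w :: "letter list"
    have "(rev w = [c]) = (w = [c])" by auto
    then show "star (Defs.mono [c]) w = - Defs.mono [c] w"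
      by (auto simp: star_def Defs.mono_def)
  qed
next
  case (add a b)
  then show ?case by (auto simp: star_def fun_eq_iff distrib_left)
next
  case (smul a r)
  then show ?case by (auto simp: star_def fun_eq_iff mult.left_commute[of _ r])
next
  case (br a b)
  have m: "mulA (\<lambda>w. - f w) (\<lambda>w. - g w) = mulA f g" for f g
    by (simp add: mulA_def fun_eq_iff)
  have "star (\<lambda>w. mulA a b w - mulA b a w) = (\<lambda>w. star (mulA a b) w - star (mulA b a) w)"
    by (simp add: star_def fun_eq_iff algebra_simps)
  also have "\<dots> = (\<lambda>w. mulA b a w - mulA a b w)"
    by (simp add: star_mul br.IH m)
  finally show ?case by (simp add: fun_eq_iff)
qed

lemma fsupp_subset: "fsupp a \<Longrightarrow> {w. b w \<noteq> 0} \<subseteq> {w. a w \<noteq> 0} \<Longrightarrow> fsupp b"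
  unfolding fsupp_def by (rule finite_subset)

lemma fsupp_add: "fsupp a \<Longrightarrow> fsupp b \<Longrightarrow> fsupp (\<lambda>w. a w + b w)"
  unfolding fsupp_def
  by (rule finite_subset[of _ "{w. a w \<noteq> 0} \<union> {w. b w \<noteq> 0}"]) auto

lemma fsupp_smul: "fsupp a \<Longrightarrow> fsupp (\<lambda>w. r * a w)"
  unfolding fsupp_def by (rule finite_subset[of _ "{w. a w \<noteq> 0}"]) auto

lemma fsupp_neg: "fsupp a \<Longrightarrow> fsupp (\<lambda>w. - a w)"
  unfolding fsupp_def by simp

lemma fsupp_diff: "fsupp a \<Longrightarrow> fsupp b \<Longrightarrow> fsupp (\<lambda>w. a w - b w)"
  unfolding fsupp_def
  by (rule finite_subset[of _ "{w. a w \<noteq> 0} \<union> {w. b w \<noteq> 0}"]) auto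

lemma fsupp_mul:
  assumes "fsupp a" "fsupp b"
  shows "fsupp (mulA a b)"
  unfolding fsupp_def
proof (rule finite_subset)
  show "{w. mulA a b w \<noteq> 0} \<subseteq> (\<lambda>(s, t). s @ t) ` ({w. a w \<noteq> 0} \<times> {w. b w \<noteq> 0})"
  proof
    fix w assume "w \<in> {w. mulA a b w \<noteq> 0}"
    then have "(\<Sum>i\<le>length w. a (take i w) * b (drop i w)) \<noteq> 0" by (simp add: mulA_def)
    then obtain i where "a (take i w) * b (drop i w) \<noteq> 0"
      by (meson sum.neutral)
    then show "w \<in> (\<lambda>(s, t). s @ t) ` ({w. a w \<noteq> 0} \<times> {w. b w \<noteq> 0})"
      by (intro image_eqI[where x="(take i w, drop i w)"]) auto
  qed
  show "finite ((\<lambda>(s, t). s @ t) ` ({w. a w \<noteq> 0} \<times> {w. b w \<noteq> 0}))"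
    using assms unfolding fsupp_def by simp
qed

lemma fsupp_Lie: "a \<in> Lie \<Longrightarrow> fsupp a"
proof (induction rule: Lie.induct)
  case (gen c)
  show ?case unfolding fsupp_def Defs.mono_def
    by (rule finite_subset[of _ "{[c]}"]) auto
next
  case (add a b) show ?case using add.IH by (rule fsupp_add)
next
  case (smul a r) show ?case using smul.IH by (rule fsupp_smul)
next
  case (br a b) show ?case using br.IH by (intro fsupp_diff fsupp_mul)
qed

lemma fsupp_Q: "\<forall>(a, b)\<in>set ps. a \<in> Lie \<and> b \<in> Lie \<Longrightarrow> fsupp (\<lambda>w. \<Sum>(a, b)\<leftarrow>ps. mulA a b w)"
proof (induction ps)
  case Nil then show ?case by (simp add: fsupp_def)
next
  case (Cons p ps)
  obtain a b where p: "p = (a, b)" by fastforce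
  have "fsupp (mulA a b)" using Cons.prems p by (auto intro!: fsupp_mul[OF fsupp_Lie fsupp_Lie])
  moreover have "fsupp (\<lambda>w. \<Sum>(a, b)\<leftarrow>ps. mulA a b w)" using Cons by auto
  ultimately show ?case using p by (simp add: fsupp_add)
qed

lemma R_Q: "R (\<lambda>w. \<Sum>(a, b)\<leftarrow>ps. mulA a b w) u = (\<Sum>(a, b)\<leftarrow>ps. R (mulA a b) u)"
proof (induction ps)
  case Nil then show ?case by (simp add: R_def)
next
  case (Cons p ps)
  obtain a b where p: "p = (a, b)" by fastforce
  show ?case using Cons p by (simp add: R_def sum.distrib)
qed

lemma star_Q: "\<forall>(a, b)\<in>set ps. a \<in> Lie \<and> b \<in> Lie \<Longrightarrow>
   star (\<lambda>w. \<Sum>(a, b)\<leftarrow>ps. mulA a b w) = (\<lambda>w. \<Sum>(a, b)\<leftarrow>ps. mulA b a w)"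
proof (induction ps)
  case Nil then show ?case by (simp add: star_def)
next
  case (Cons p ps)
  obtain a b where p: "p = (a, b)" by fastforce
  have ab: "a \<in> Lie" "b \<in> Lie" using Cons.prems p by auto
  have m: "mulA (\<lambda>w. - f w) (\<lambda>w. - g w) = mulA f g" for f g
    by (simp add: mulA_def fun_eq_iff)
  have s: "star (mulA a b) = mulA b a" using star_mul[of a b] star_Lie[OF ab(1)] star_Lie[OF ab(2)] m by simp
  have IH: "star (\<lambda>w. \<Sum>(a, b)\<leftarrow>ps. mulA a b w) = (\<lambda>w. \<Sum>(a, b)\<leftarrow>ps. mulA b a w)" using Cons by auto
  have "star (\<lambda>w. \<Sum>(a, b)\<leftarrow>p # ps. mulA a b w) =
     (\<lambda>w. star (mulA a b) w + star (\<lambda>w. \<Sum>(a, b)\<leftarrow>ps. mulA a b w) w)"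
    using p by (simp add: star_def fun_eq_iff algebra_simps)
  then show ?case using s IH p by simp
qed

lemma R_Q_sym: "R (\<lambda>w. \<Sum>(a, b)\<leftarrow>ps. mulA b a w) u = R (\<lambda>w. \<Sum>(a, b)\<leftarrow>ps. mulA a b w) u"
proof (induction ps)
  case Nil then show ?case by (simp add: R_def)
next
  case (Cons p ps)
  obtain a b where p: "p = (a, b)" by fastforce
  have "R (mulA b a) u = R (mulA a b) u" by (rule R_mul_comm)
  then show ?case using Cons p by (simp add: R_def sum.distrib)
qed

lemma R_star: "R (star P) u = (-1) ^ length u * R P (rev u)"
proof -
  have "R (star P) u = (-1) ^ length u * R (\<lambda>v. P (rev v)) u"
    by (simp add: R_def star_def sum_distrib_left)
  then show ?thesis by (simp add: R_rev)
qed



lemma linext_eq: "linext f a v = (\<Sum>w\<in>{w. a w \<noteq> 0}. a w * f w v)"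
  by (simp add: linext_def)

definition Wd :: "letter \<Rightarrow> letter list \<Rightarrow> nat \<Rightarrow> letter list" where
  "Wd x0 u i = drop (length u - i) u @ x0 # take (length u - i) u"

lemma length_Wd: "i \<le> length u \<Longrightarrow> length (Wd x0 u i) = Suc (length u)"
  by (simp add: Wd_def)

lemma cond_iff:
  assumes i: "i \<le> length u" and lw: "length w = Suc (length u)"
  shows "(w ! i = x0 \<and> drop (Suc i) w @ take i w = u) \<longleftrightarrow> w = Wd x0 u i"
proof
  assume c: "w ! i = x0 \<and> drop (Suc i) w @ take i w = u"
  have iw: "i < length w" using i lw by simp
  have k: "length u - i = length (drop (Suc i) w)" using lw by simp
  have u: "u = drop (Suc i) w @ take i w" using c by simp
  have "Wd x0 u i = take i w @ x0 # drop (Suc i) w"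
    unfolding Wd_def k by (subst (1 2) u) simp
  also have "\<dots> = w" using id_take_nth_drop[OF iw] c by simp
  finally show "w = Wd x0 u i" by simp
next
  assume w: "w = Wd x0 u i"
  have l: "length (drop (length u - i) u) = i" using i by simp
  have "w ! i = x0" unfolding w Wd_def using l by (simp add: nth_append)
  moreover have "drop (Suc i) w = take (length u - i) u" unfolding w Wd_def using l
    by simp
  moreover have "take i w = drop (length u - i) u" unfolding w Wd_def using l by simp
  ultimately show "w ! i = x0 \<and> drop (Suc i) w @ take i w = u" by simp
qed

lemma inner_cder:
  "(\<Sum>i<length w. if w ! i = x0 \<and> drop (Suc i) w @ take i w = u then 1 else 0 :: real)
   = (\<Sum>i\<le>length u. if w = Wd x0 u i then 1 else 0)"
proof (cases "length w = Suc (length u)")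
  case True
  have "{..<length w} = {..length u}" using True by auto
  then show ?thesis using cond_iff[OF _ True] by (auto intro!: sum.cong)
next
  case False
  have "(\<Sum>i<length w. if w ! i = x0 \<and> drop (Suc i) w @ take i w = u then 1 else 0 :: real) = 0"
  proof (rule sum.neutral, rule ballI)
    fix i assume "i \<in> {..<length w}"
    then have i: "i < length w" by simp
    then have "length (drop (Suc i) w @ take i w) = length w - 1" by auto
    then show "(if w ! i = x0 \<and> drop (Suc i) w @ take i w = u then 1 else 0 :: real) = 0"
      using False i by auto
  qed
  moreover have "(\<Sum>i\<le>length u. if w = Wd x0 u i then 1 else 0 :: real) = 0"
    using False length_Wd by (intro sum.neutral) auto
  ultimately show ?thesis by simp
qed

lemma cder_R:
  assumes f: "fsupp P"
  shows "cder x0 P u = R P (x0 # u)"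
proof -
  let ?S = "{w. P w \<noteq> 0}"
  have fin: "finite ?S" using f by (simp add: fsupp_def)
  have "cder x0 P u = (\<Sum>w\<in>?S. P w * (\<Sum>i\<le>length u. if w = Wd x0 u i then 1 else 0))"
    unfolding cder_def linext_eq inner_cder ..
  also have "\<dots> = (\<Sum>w\<in>?S. \<Sum>i\<le>length u. if w = Wd x0 u i then P w else 0)"
    unfolding sum_distrib_left by (intro sum.cong refl) simp
  also have "\<dots> = (\<Sum>i\<le>length u. \<Sum>w\<in>?S. if w = Wd x0 u i then P w else 0)"
    by (rule sum.swap)
  also have "\<dots> = (\<Sum>i\<le>length u. P (Wd x0 u i))"
  proof (rule sum.cong[OF refl])
    fix i
    have "(\<Sum>w\<in>?S. if w = Wd x0 u i then P w else 0) = (if Wd x0 u i \<in> ?S then P (Wd x0 u i) else 0)"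
      using fin by (simp add: sum.delta')
    also have "\<dots> = P (Wd x0 u i)" by auto
    finally show "(\<Sum>w\<in>?S. if w = Wd x0 u i then P w else 0) = P (Wd x0 u i)" .
  qed
  also have "\<dots> = (\<Sum>k\<le>length u. P (drop k u @ x0 # take k u))"
    unfolding Wd_def by (rule sum_rev_atMost[of "\<lambda>k. P (drop k u @ x0 # take k u)"])
  also have "\<dots> = (\<Sum>k<Suc (length u). P (rotate (Suc k) (x0 # u)))"
    unfolding lessThan_Suc_atMost
  proof (rule sum.cong[OF refl])
    fix k assume "k \<in> {..length u}"
    then have "rotate (Suc k) (x0 # u) = drop (Suc k) (x0 # u) @ take (Suc k) (x0 # u)"
      by (intro rot_le) simp
    then show "P (drop k u @ x0 # take k u) = P (rotate (Suc k) (x0 # u))" by simp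
  qed
  also have "\<dots> = (\<Sum>j<Suc (length u). P (rotate j (x0 # u)))"
  proof -
    define f where "f = (\<lambda>j. P (rotate j (x0 # u)))"
    have r: "f (Suc (length u)) = f 0" unfolding f_def
      by (metis length_Cons rotate_id mod_self rotate0 id_apply)
    have "(\<Sum>k<Suc (length u). f (Suc k)) = (\<Sum>k<length u. f (Suc k)) + f (Suc (length u))"
      by (rule sum.lessThan_Suc)
    also have "\<dots> = f 0 + (\<Sum>k<length u. f (Suc k))" using r by simp
    also have "\<dots> = (\<Sum>j<Suc (length u). f j)" by (rule sum.lessThan_Suc_shift[symmetric])
    finally show ?thesis unfolding f_def .
  qed
  also have "\<dots> = R P (x0 # u)" by (simp add: R_def)
  finally show ?thesis .
qed

lemma fsupp_cder:
  assumes f: "fsupp P"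
  shows "fsupp (cder x0 P)"
  unfolding fsupp_def
proof (rule finite_subset)
  let ?S = "{w. P w \<noteq> 0}"
  show "{v. cder x0 P v \<noteq> 0} \<subseteq> (\<Union>w\<in>?S. (\<lambda>i. drop (Suc i) w @ take i w) ` {..<length w})"
  proof
    fix v assume "v \<in> {v. cder x0 P v \<noteq> 0}"
    then have "(\<Sum>w\<in>?S. P w * (\<Sum>i<length w. if w ! i = x0 \<and> drop (Suc i) w @ take i w = v then 1 else 0)) \<noteq> 0"
      by (simp add: cder_def linext_eq)
    then obtain w where w: "w \<in> ?S"
      and "P w * (\<Sum>i<length w. if w ! i = x0 \<and> drop (Suc i) w @ take i w = v then 1 else 0) \<noteq> 0"
      by (meson sum.neutral)
    then have "(\<Sum>i<length w. if w ! i = x0 \<and> drop (Suc i) w @ take i w = v then 1 else 0 :: real) \<noteq> 0"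
      by auto
    then obtain i where "i < length w" "drop (Suc i) w @ take i w = v"
      by (rule sum.not_neutral_contains_not_neutral) (auto split: if_splits)
    then show "v \<in> (\<Union>w\<in>?S. (\<lambda>i. drop (Suc i) w @ take i w) ` {..<length w})" using w by blast
  qed
  show "finite (\<Union>w\<in>?S. (\<lambda>i. drop (Suc i) w @ take i w) ` {..<length w})"
    using f by (simp add: fsupp_def)
qed

lemma inner_derL:
  "(\<Sum>i<length w. if w ! i = x0 \<and> take i w = v then epsA (Defs.mono (drop (Suc i) w)) else 0)
   = (if w = v @ [x0] then 1 else 0)"
proof -
  have pw: "(if w ! i = x0 \<and> take i w = v then epsA (Defs.mono (drop (Suc i) w)) else 0)
      = (if i = length v \<and> w = v @ [x0] then 1 else 0)" if i: "i < length w" for i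
  proof -
    have "(w ! i = x0 \<and> take i w = v \<and> drop (Suc i) w = []) \<longleftrightarrow> (i = length v \<and> w = v @ [x0])"
    proof
      assume c: "w ! i = x0 \<and> take i w = v \<and> drop (Suc i) w = []"
      have "w = take i w @ w ! i # drop (Suc i) w" by (rule id_take_nth_drop[OF i])
      then have "w = v @ [x0]" using c by simp
      moreover have "i = length v" using c i by auto
      ultimately show "i = length v \<and> w = v @ [x0]" by simp
    qed auto
    then show ?thesis by (auto simp: epsA_def Defs.mono_def)
  qed
  have "(\<Sum>i<length w. if w ! i = x0 \<and> take i w = v then epsA (Defs.mono (drop (Suc i) w)) else 0)
     = (\<Sum>i<length w. if i = length v \<and> w = v @ [x0] then 1 else 0)"
    using pw by (intro sum.cong) auto
  also have "\<dots> = (if w = v @ [x0] then 1 else 0)"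
    by (cases "w = v @ [x0]") auto
  finally show ?thesis .
qed

lemma derL_eq:
  assumes f: "fsupp g"
  shows "derL x0 g v = g (v @ [x0])"
proof -
  let ?S = "{w. g w \<noteq> 0}"
  have fin: "finite ?S" using f by (simp add: fsupp_def)
  have "derL x0 g v = (\<Sum>w\<in>?S. g w * (if w = v @ [x0] then 1 else 0))"
    unfolding derL_def linext_eq inner_derL ..
  also have "\<dots> = (\<Sum>w\<in>?S. if w = v @ [x0] then g w else 0)"
    by (rule sum.cong) auto
  also have "\<dots> = g (v @ [x0])" using fin by (simp add: sum.delta')
  finally show ?thesis .
qed



theorem mainTheorem15:
  assumes "\<Gamma> \<in> FL"
  shows "divg (uGamma \<Gamma>) = tr (\<lambda>w. derL X (cyc_der Y \<Gamma>) w - star (derL X (cyc_der Y \<Gamma>)) w)"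
proof -
  obtain ps where ps: "\<forall>(a, b)\<in>set ps. a \<in> Lie \<and> b \<in> Lie"
    and G: "\<Gamma> = tr (\<lambda>w. \<Sum>(a, b)\<leftarrow>ps. mulA a b w)"
    using assms unfolding FL_def by blast
  define Q where "Q = (\<lambda>w. \<Sum>(a, b)\<leftarrow>ps. mulA a b w)"
  have fQ: "fsupp Q" unfolding Q_def by (rule fsupp_Q[OF ps])
  have ex: "\<exists>P. fsupp P \<and> tr P = \<Gamma>" using fQ G Q_def by blast
  define P where "P = (SOME P. fsupp P \<and> tr P = \<Gamma>)"
  have fP: "fsupp P" and tP: "tr P = \<Gamma>" using someI_ex[OF ex] unfolding P_def by auto
  have cd: "cyc_der x0 \<Gamma> = cder x0 P" for x0 unfolding cyc_der_def P_def ..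
  have trPQ: "tr P = tr Q" using tP G Q_def by simp
  have PQ: "R P u = R Q u" for u using trPQ by (rule R_cong_tr)
  have QQ: "R (star Q) u = R Q u" for u
    unfolding Q_def star_Q[OF ps] by (rule R_Q_sym)
  have key: "R P u = R (star P) u" for u
  proof -
    have "R (star P) u = (-1) ^ length u * R P (rev u)" by (rule R_star)
    also have "\<dots> = (-1) ^ length u * R Q (rev u)" using PQ[of "rev u"] by simp
    also have "\<dots> = R (star Q) u" by (simp add: R_star)
    also have "\<dots> = R P u" using QQ[of u] PQ[of u] by simp
    finally show ?thesis by simp
  qed
  have hX: "cder X P (w @ [Y]) = star (\<lambda>v. cder Y P (v @ [X])) w" for w
  proof -
    have "cder X P (w @ [Y]) = R P (X # w @ [Y])" by (rule cder_R[OF fP])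
    also have "\<dots> = R (star P) (X # w @ [Y])" by (rule key)
    also have "\<dots> = (-1) ^ length w * R P (Y # rev w @ [X])" by (simp add: R_star)
    also have "\<dots> = (-1) ^ length w * cder Y P (rev w @ [X])" by (simp add: cder_R[OF fP])
    finally show ?thesis unfolding star_def by simp
  qed
  have d1: "derL X (cyc_der Y \<Gamma>) = (\<lambda>v. cder Y P (v @ [X]))"
    unfolding cd by (rule ext, rule derL_eq[OF fsupp_cder[OF fP]])
  have u2: "uGamma \<Gamma> Y = (\<lambda>w. - cder X P w)" by (simp add: uGamma_def cd)
  have d2: "derL Y (uGamma \<Gamma> Y) = (\<lambda>v. - cder X P (v @ [Y]))"
  proof
    fix v show "derL Y (uGamma \<Gamma> Y) v = - cder X P (v @ [Y])"
      unfolding u2 by (simp add: derL_eq fsupp_neg fsupp_cder fP)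
  qed
  have d3: "uGamma \<Gamma> X = cyc_der Y \<Gamma>" by (simp add: uGamma_def)
  have fe: "(\<lambda>w. cder Y P (w @ [X]) + - cder X P (w @ [Y])) =
       (\<lambda>w. cder Y P (w @ [X]) - star (\<lambda>v. cder Y P (v @ [X])) w)"
  proof
    fix w show "cder Y P (w @ [X]) + - cder X P (w @ [Y]) = cder Y P (w @ [X]) - star (\<lambda>v. cder Y P (v @ [X])) w"
      using hX[of w] by simp
  qed
  show ?thesis unfolding divg_def d3 d2 d1 fe ..
qed


end
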